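(* For every instance of the Balancing with Conflicts game with $n$ players and $m$ machines: - the price of total anarchy is at most $2-\frac1m+\frac{m-1}{n}$ if $n\ge m$; - it is at most $1+\frac{2n-2}{m}$ if $n<m$; - it is at most $3-\frac2m$ for every $n$.
   Context: An instance of the Balancing with Conflicts (BwC) game consists of: - players $N=\{1,\dots,n\}$; - machines $M=\{1,\dots,m\}$; - a simple undirected graph $G=(N,E)$. Each player chooses one machine, so a state is $\vec s\in M^n$. Let $X_k(\vec s)=\{i:s_i=k\}$ and $x_k(\vec s)=|X_k(\vec s)|$. For $X\subseteq N$, $e(X)$ is the number of edges with both endpoints in $X$, and $e(\{i\},X)$ is the number of neighbours of $i$ in $X$. The cost of player $i$ with $s_i=k$ is $c_i(\vec s)=x_k(\vec s)+e(\{i\},X_k(\vec s))$. The social cost is $$c(\vec s)=\sum_ic_i(\vec s)=\sum_k\big(x_k(\vec s)^2+2e(X_k(\vec s))\big),$$ and $\vec s^*$ minimizes $c$. A coarse correlated equilibrium (CCE) is a probability distribution $\sigma$ over states such that for every player $i$ and every machine $s_i'$, $$\mathbf E_{\vec s\sim\sigma}[c_i(\vec s)]\le\mathbf E_{\vec s\sim\sigma}[c_i(s_i',\vec s_{-i})].$$ The price of total anarchy of an instance is the supremum over all CCE $\sigma$ of $\mathbf E_{\vec s\sim\sigma}[c(\vec s)]/c(\vec s^* )$. *)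

theory Defs
  imports Complex_Main "HOL-Library.FuncSet"
begin

definition simple_graph :: "nat \<Rightarrow> (nat \<Rightarrow> nat \<Rightarrow> bool) \<Rightarrow> bool" where
  "simple_graph n E \<longleftrightarrow> (\<forall>i<n. \<forall>j<n. E i j \<longleftrightarrow> E j i) \<and> (\<forall>i<n. \<not> E i i)"

definition states :: "nat \<Rightarrow> nat \<Rightarrow> (nat \<Rightarrow> nat) set" where
  "states n m = ({..<n} \<rightarrow>\<^sub>E {..<m})"

definition load_set :: "nat \<Rightarrow> (nat \<Rightarrow> nat) \<Rightarrow> nat \<Rightarrow> nat set" where
  "load_set n s k = {j. j < n \<and> s j = k}"

definition player_cost :: "nat \<Rightarrow> (nat \<Rightarrow> nat \<Rightarrow> bool) \<Rightarrow> (nat \<Rightarrow> nat) \<Rightarrow> nat \<Rightarrow> real" where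
  "player_cost n E s i =
     real (card (load_set n s (s i))) + real (card {j \<in> load_set n s (s i). E i j})"

definition social_cost :: "nat \<Rightarrow> (nat \<Rightarrow> nat \<Rightarrow> bool) \<Rightarrow> (nat \<Rightarrow> nat) \<Rightarrow> real" where
  "social_cost n E s = (\<Sum>i<n. player_cost n E s i)"

definition opt_cost :: "nat \<Rightarrow> nat \<Rightarrow> (nat \<Rightarrow> nat \<Rightarrow> bool) \<Rightarrow> real" where
  "opt_cost n m E = Min (social_cost n E ` states n m)"

definition is_distribution :: "nat \<Rightarrow> nat \<Rightarrow> ((nat \<Rightarrow> nat) \<Rightarrow> real) \<Rightarrow> bool" where
  "is_distribution n m \<sigma> \<longleftrightarrow>
     (\<forall>s\<in>states n m. \<sigma> s \<ge> 0) \<and> (\<Sum>s\<in>states n m. \<sigma> s) = 1"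

definition is_CCE :: "nat \<Rightarrow> nat \<Rightarrow> (nat \<Rightarrow> nat \<Rightarrow> bool) \<Rightarrow> ((nat \<Rightarrow> nat) \<Rightarrow> real) \<Rightarrow> bool" where
  "is_CCE n m E \<sigma> \<longleftrightarrow> is_distribution n m \<sigma> \<and>
     (\<forall>i<n. \<forall>k<m.
        (\<Sum>s\<in>states n m. \<sigma> s * player_cost n E s i)
          \<le> (\<Sum>s\<in>states n m. \<sigma> s * player_cost n E (s(i := k)) i))"

definition expected_social_cost ::
  "nat \<Rightarrow> nat \<Rightarrow> (nat \<Rightarrow> nat \<Rightarrow> bool) \<Rightarrow> ((nat \<Rightarrow> nat) \<Rightarrow> real) \<Rightarrow> real" where
  "expected_social_cost n m E \<sigma> = (\<Sum>s\<in>states n m. \<sigma> s * social_cost n E s)"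

end

theory Submission imports Defs begin
declare sum_of_bool_eq [simp del] sum_of_bool_mult_eq [simp del]

lemma card_ind: "real (card {j. j < (n::nat) \<and> P j}) = (\<Sum>j<n. of_bool (P j))"
proof -
  have "{j. j < n \<and> P j} = {..<n} \<inter> {j. P j}" by auto
  moreover have "(\<Sum>j<n. of_bool (P j)) = real (card ({..<n} \<inter> {j. P j}))"
    by (simp add: sum_of_bool_eq)
  ultimately show ?thesis by simp
qed

lemma pc_ind: "player_cost n E s i =
   (\<Sum>j<n. of_bool (s j = s i)) + (\<Sum>j<n. of_bool (s j = s i \<and> E i j))"
proof -
  have "{j \<in> load_set n s (s i). E i j} = {j. j < n \<and> (s j = s i \<and> E i j)}"
    unfolding load_set_def by auto
  thus ?thesis unfolding player_cost_def
    by (simp add: card_ind[symmetric] load_set_def conj_commute)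
qed

lemma delta_ind: assumes "a < (m::nat)" shows "(\<Sum>k<m. of_bool (a = k \<and> P)) = (of_bool P :: real)"
proof -
  have "(\<Sum>k<m. of_bool (a = k \<and> P)) = (\<Sum>k<m. if k = a then (of_bool P::real) else 0)"
    by (rule sum.cong) auto
  also have "\<dots> = (of_bool P::real)" using assms by (cases P) (simp_all add: sum.delta)
  finally show ?thesis .
qed

lemma delta1: assumes "a < (m::nat)" shows "(\<Sum>k<m. of_bool (a = k)) = (1::real)"
  using delta_ind[OF assms, of True] by simp

lemma dev_sum:
  assumes s: "s \<in> states n m" and i: "i < n" and g: "simple_graph n E"
  shows "(\<Sum>k<m. player_cost n E (s(i := k)) i) = real m + real n - 1 + (\<Sum>j<n. of_bool (E i j))"
proof -
  have sj: "\<And>j. j < n \<Longrightarrow> s j < m" using s unfolding states_def by auto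
  have Eii: "\<not> E i i" using g i unfolding simple_graph_def by auto
  have A: "(\<Sum>j<n. \<Sum>k<m. of_bool ((s(i:=k)) j = k)::real) = (\<Sum>j<n. 1 + (if j = i then real m - 1 else 0))"
  proof (rule sum.cong)
    fix j assume "j \<in> {..<n}"
    then have "j < n" by simp
    show "(\<Sum>k<m. of_bool ((s(i:=k)) j = k)::real) = 1 + (if j = i then real m - 1 else 0)"
    proof (cases "j = i")
      case True thus ?thesis by simp
    next
      case False
      have "(\<Sum>k<m. of_bool ((s(i:=k)) j = k)::real) = (\<Sum>k<m. of_bool (s j = k \<and> True)::real)"
        using False by simp
      also have "\<dots> = 1" using delta_ind[OF sj[OF \<open>j<n\<close>], of True] by simp
      finally show ?thesis using False by simp
    qed
  qed simp
  have A2: "(\<Sum>j<n. 1 + (if j = i then real m - 1 else 0)) = real n + (real m - 1)"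
    using i by (simp add: sum.distrib sum.delta)
  have B: "(\<Sum>j<n. \<Sum>k<m. of_bool ((s(i:=k)) j = k \<and> E i j)::real) = (\<Sum>j<n. of_bool (E i j))"
  proof (rule sum.cong)
    fix j assume "j \<in> {..<n}"
    then have "j < n" by simp
    show "(\<Sum>k<m. of_bool ((s(i:=k)) j = k \<and> E i j)) = (of_bool (E i j)::real)"
    proof (cases "j = i")
      case True thus ?thesis using Eii by simp
    next
      case False
      have "(\<Sum>k<m. of_bool ((s(i:=k)) j = k \<and> E i j)::real) = (\<Sum>k<m. of_bool (s j = k \<and> E i j)::real)"
        using False by simp
      also have "\<dots> = (of_bool (E i j)::real)" using delta_ind[OF sj[OF \<open>j<n\<close>]] by simp
      finally show ?thesis .
    qed
  qed simp
  have "(\<Sum>k<m. player_cost n E (s(i := k)) i)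
     = (\<Sum>k<m. (\<Sum>j<n. of_bool ((s(i:=k)) j = k)) + (\<Sum>j<n. of_bool ((s(i:=k)) j = k \<and> E i j)))"
    by (simp add: pc_ind)
  also have "\<dots> = (\<Sum>j<n. \<Sum>k<m. of_bool ((s(i:=k)) j = k)) + (\<Sum>j<n. \<Sum>k<m. of_bool ((s(i:=k)) j = k \<and> E i j))"
    by (simp add: sum.distrib sum.swap[of _ "{..<m}"])
  also have "\<dots> = real n + (real m - 1) + (\<Sum>j<n. of_bool (E i j))"
    using A A2 B by simp
  finally show ?thesis by simp
qed


lemma ec_bound:
  assumes cce: "is_CCE n m E \<sigma>" and g: "simple_graph n E"
  shows "real m * expected_social_cost n m E \<sigma>
     \<le> real n * (real m + real n - 1) + (\<Sum>i<n. \<Sum>j<n. of_bool (E i j))"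
proof -
  let ?St = "states n m"
  have fin: "finite ?St" unfolding states_def by (simp add: finite_PiE)
  have dist: "\<forall>s\<in>?St. \<sigma> s \<ge> 0" "(\<Sum>s\<in>?St. \<sigma> s) = 1"
    using cce unfolding is_CCE_def is_distribution_def by auto
  have each: "real m * (\<Sum>s\<in>?St. \<sigma> s * player_cost n E s i)
        \<le> real m + real n - 1 + (\<Sum>j<n. of_bool (E i j))" if i: "i < n" for i
  proof -
    let ?L = "(\<Sum>s\<in>?St. \<sigma> s * player_cost n E s i)"
    have "real m * ?L = (\<Sum>k<m. ?L)" by simp
    also have "\<dots> \<le> (\<Sum>k<m. \<Sum>s\<in>?St. \<sigma> s * player_cost n E (s(i:=k)) i)"
      by (rule sum_mono) (use cce i in \<open>auto simp: is_CCE_def\<close>)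
    also have "\<dots> = (\<Sum>s\<in>?St. \<sigma> s * (\<Sum>k<m. player_cost n E (s(i:=k)) i))"
      by (simp add: sum.swap[of _ "{..<m}"] sum_distrib_left)
    also have "\<dots> = (\<Sum>s\<in>?St. \<sigma> s * (real m + real n - 1 + (\<Sum>j<n. of_bool (E i j))))"
      by (rule sum.cong) (simp_all add: dev_sum[OF _ i g])
    also have "\<dots> = real m + real n - 1 + (\<Sum>j<n. of_bool (E i j))"
      using dist by (simp add: sum_distrib_right[symmetric])
    finally show ?thesis .
  qed
  have "real m * expected_social_cost n m E \<sigma>
      = (\<Sum>i<n. real m * (\<Sum>s\<in>?St. \<sigma> s * player_cost n E s i))"
    unfolding expected_social_cost_def social_cost_def
    by (simp add: sum_distrib_left sum.swap[of _ "{..<n}"] mult.assoc)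
  also have "\<dots> \<le> (\<Sum>i<n. real m + real n - 1 + (\<Sum>j<n. of_bool (E i j)))"
    by (rule sum_mono) (simp add: each)
  also have "\<dots> = real n * (real m + real n - 1) + (\<Sum>i<n. \<Sum>j<n. of_bool (E i j))"
    by (simp add: sum.distrib)
  finally show ?thesis .
qed


lemma opt_facts:
  fixes E :: "nat \<Rightarrow> nat \<Rightarrow> bool"
  assumes s: "s \<in> states n m" and m: "m \<ge> 1"
  defines "S \<equiv> (\<Sum>i<n. \<Sum>j<n. of_bool (s j = s i)::real)"
      and "Q \<equiv> (\<Sum>i<n. \<Sum>j<n. of_bool (s j = s i \<and> E i j)::real)"
  shows "social_cost n E s = S + Q" "(\<Sum>i<n. \<Sum>j<n. of_bool (E i j)) \<le> Q + real n * real n - S"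
        "S \<ge> real n" "real m * S \<ge> real n * real n" "Q \<ge> 0"
proof -
  have sj: "\<And>j. j < n \<Longrightarrow> s j < m" using s unfolding states_def by auto
  show "social_cost n E s = S + Q" unfolding social_cost_def S_def Q_def
    by (simp add: pc_ind sum.distrib)
  have "(\<Sum>i<n. \<Sum>j<n. of_bool (E i j)::real)
      \<le> (\<Sum>i<n. \<Sum>j<n. of_bool (s j = s i \<and> E i j) + (1 - of_bool (s j = s i)))"
    by (intro sum_mono) auto
  also have "\<dots> = Q + real n * real n - S"
    unfolding S_def Q_def by (simp add: sum.distrib sum_subtractf)
  finally show "(\<Sum>i<n. \<Sum>j<n. of_bool (E i j)) \<le> Q + real n * real n - S" .
  show "Q \<ge> 0" unfolding Q_def by (intro sum_nonneg) auto
  have "(\<Sum>i<n. (1::real)) \<le> S" unfolding S_def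
  proof (rule sum_mono)
    fix i assume "i \<in> {..<n}"
    then show "1 \<le> (\<Sum>j<n. of_bool (s j = s i)::real)"
      using member_le_sum[of i "{..<n}" "\<lambda>j. of_bool (s j = s i)::real"] by auto
  qed
  then show "S \<ge> real n" by simp
  define x where "x k = (\<Sum>i<n. of_bool (s i = k)::real)" for k
  have sx: "(\<Sum>k<m. x k) = real n"
  proof -
    have "(\<Sum>k<m. x k) = (\<Sum>i<n. \<Sum>k<m. of_bool (s i = k \<and> True)::real)"
      unfolding x_def by (simp add: sum.swap[of _ "{..<m}"])
    also have "\<dots> = (\<Sum>i<n. 1)" by (rule sum.cong) (simp_all add: delta1 sj)
    finally show ?thesis by simp
  qed
  have sx2: "(\<Sum>k<m. x k * x k) = S"
  proof -
    have "(\<Sum>k<m. x k * x k) = (\<Sum>k<m. \<Sum>i<n. \<Sum>j<n. of_bool (s i = k \<and> s j = s i)::real)"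
    proof (rule sum.cong)
      fix k show "x k * x k = (\<Sum>i<n. \<Sum>j<n. of_bool (s i = k \<and> s j = s i)::real)"
        unfolding x_def sum_distrib_left sum_distrib_right
        by (rule sum.cong, simp, rule sum.cong) auto
    qed simp
    also have "\<dots> = (\<Sum>i<n. \<Sum>k<m. \<Sum>j<n. of_bool (s i = k \<and> s j = s i)::real)"
      by (rule sum.swap)
    also have "\<dots> = (\<Sum>i<n. \<Sum>j<n. \<Sum>k<m. of_bool (s i = k \<and> s j = s i)::real)"
      by (rule sum.cong, simp, rule sum.swap)
    also have "\<dots> = S" unfolding S_def
      by (rule sum.cong, simp, rule sum.cong) (simp_all add: delta_ind sj)
    finally show ?thesis .
  qed
  have "0 \<le> (\<Sum>k<m. (real m * x k - real n)^2)" by (intro sum_nonneg) auto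
  also have "\<dots> = (\<Sum>k<m. real m * real m * (x k * x k) - 2 * real m * real n * x k + real n * real n)"
    by (rule sum.cong) (simp_all add: power2_eq_square algebra_simps)
  also have "\<dots> = real m * real m * S - 2 * real m * real n * real n + real m * (real n * real n)"
    by (simp add: sum.distrib sum_subtractf sum_distrib_left[symmetric] sx sx2)
  finally have "0 \<le> real m * (real m * S - real n * real n)" by (simp add: algebra_simps)
  then show "real m * S \<ge> real n * real n" using m
    by (simp add: zero_le_mult_iff)
qed

lemma alg1: fixes N M S Q X :: real
  assumes M: "M \<ge> 1" and NM: "N \<ge> M" and CS: "M*S \<ge> N*N" and Q: "Q \<ge> 0"
    and X: "M * X \<le> N*(M+N-1) + Q + N*N - S"
  shows "X \<le> (2 - 1/M + (M-1)/N)*(S+Q)"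
proof -
  have N: "N > 0" using M NM by linarith
  have h1: "(2*N+M-1)*(M*S) \<ge> (2*N+M-1)*(N*N)" using CS M N by (intro mult_left_mono) auto
  have h2: "(M-1)*(2*N+M)*Q \<ge> 0" using M N Q
    by (intro mult_nonneg_nonneg) auto
  have h3: "N*(M*X) \<le> N*(N*(M+N-1) + Q + N*N - S)" using X N by (intro mult_left_mono) auto
  have key: "(M*N)*X \<le> (2*M*N - N + M*M - M)*(S+Q)"
    using h1 h2 h3 by (simp add: algebra_simps)
  have eq: "(2 - 1/M + (M-1)/N)*(S+Q) = ((2*M*N - N + M*M - M)*(S+Q))/(M*N)"
    using M N by (simp add: field_simps)
  show ?thesis unfolding eq using key M N by (simp add: pos_le_divide_eq mult.commute)
qed

lemma alg2: fixes N M S Q X :: real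
  assumes M: "M \<ge> 1" and N: "N \<ge> 1" and CS: "S \<ge> N" and Q: "Q \<ge> 0"
    and X: "M * X \<le> N*(M+N-1) + Q + N*N - S"
  shows "X \<le> (1 + (2*N-2)/M)*(S+Q)"
proof -
  have h1: "(M+2*N-1)*S \<ge> (M+2*N-1)*N" using CS M N by (intro mult_left_mono) auto
  have h2: "(M+2*N-3)*Q \<ge> 0" using M N Q by (intro mult_nonneg_nonneg) auto
  have key: "M*X \<le> (M + 2*N - 2)*(S+Q)"
    using h1 h2 X by (simp add: algebra_simps)
  have eq: "(1 + (2*N-2)/M)*(S+Q) = ((M + 2*N - 2)*(S+Q))/M"
    using M by (simp add: field_simps)
  show ?thesis unfolding eq using key M by (simp add: pos_le_divide_eq mult.commute)
qed

theorem corollary5: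
  fixes n m :: nat and E :: "nat \<Rightarrow> nat \<Rightarrow> bool"
  assumes "n \<ge> 1" and "m \<ge> 1" and "simple_graph n E"
  shows "(n \<ge> m \<longrightarrow> (\<forall>\<sigma>. is_CCE n m E \<sigma> \<longrightarrow>
            expected_social_cost n m E \<sigma> \<le> (2 - 1 / real m + (real m - 1) / real n) * opt_cost n m E))
       \<and> (n < m \<longrightarrow> (\<forall>\<sigma>. is_CCE n m E \<sigma> \<longrightarrow>
            expected_social_cost n m E \<sigma> \<le> (1 + (2 * real n - 2) / real m) * opt_cost n m E))
       \<and> (\<forall>\<sigma>. is_CCE n m E \<sigma> \<longrightarrow>
            expected_social_cost n m E \<sigma> \<le> (3 - 2 / real m) * opt_cost n m E)"
proof -
  have fin: "finite (states n m)" unfolding states_def by (simp add: finite_PiE)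
  have ne: "(\<lambda>i. if i < n then 0 else undefined) \<in> states n m"
    unfolding states_def using assms(2) by (auto split: if_splits)
  have "opt_cost n m E \<in> social_cost n E ` states n m"
    unfolding opt_cost_def using fin ne by (intro Min_in) auto
  then obtain s0 where s0: "s0 \<in> states n m" and oc: "opt_cost n m E = social_cost n E s0" by auto
  define S where "S = (\<Sum>i<n. \<Sum>j<n. of_bool (s0 j = s0 i)::real)"
  define Q where "Q = (\<Sum>i<n. \<Sum>j<n. of_bool (s0 j = s0 i \<and> E i j)::real)"
  have F: "social_cost n E s0 = S + Q" "(\<Sum>i<n. \<Sum>j<n. of_bool (E i j)) \<le> Q + real n * real n - S"
        "S \<ge> real n" "real m * S \<ge> real n * real n" "Q \<ge> 0"
    unfolding S_def Q_def by (rule opt_facts[OF s0 assms(2)])+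
  have oc2: "opt_cost n m E = S + Q" using oc F(1) by simp
  have X: "real m * expected_social_cost n m E \<sigma> \<le> real n * (real m + real n - 1) + Q + real n * real n - S"
    if "is_CCE n m E \<sigma>" for \<sigma>
    using ec_bound[OF that assms(3)] F(2) by linarith
  have M: "real m \<ge> 1" "real n \<ge> 1" using assms by auto
  have P1: "expected_social_cost n m E \<sigma> \<le> (2 - 1 / real m + (real m - 1) / real n) * opt_cost n m E"
    if "is_CCE n m E \<sigma>" "n \<ge> m" for \<sigma>
    unfolding oc2 by (rule alg1[OF M(1) _ F(4) F(5) X[OF that(1)]]) (use that in simp)
  have P2: "expected_social_cost n m E \<sigma> \<le> (1 + (2 * real n - 2) / real m) * opt_cost n m E"
    if "is_CCE n m E \<sigma>" for \<sigma>
    unfolding oc2 by (rule alg2[OF M F(3) F(5) X[OF that(1)]])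
  have SQ: "S + Q \<ge> 0" using F(3) F(5) by linarith
  have P3: "expected_social_cost n m E \<sigma> \<le> (3 - 2 / real m) * opt_cost n m E"
    if c: "is_CCE n m E \<sigma>" for \<sigma>
  proof (cases "n \<ge> m")
    case True
    have "(2 - 1 / real m + (real m - 1) / real n) \<le> 3 - 2 / real m"
    proof -
      have "(real m - 1) / real n \<le> (real m - 1) / real m"
        using True M by (intro divide_left_mono) auto
      also have "\<dots> = 1 - 1 / real m" using M by (simp add: field_simps)
      finally show ?thesis by simp
    qed
    hence "(2 - 1 / real m + (real m - 1) / real n) * opt_cost n m E \<le> (3 - 2 / real m) * opt_cost n m E"
      unfolding oc2 using SQ by (intro mult_right_mono) auto
    thus ?thesis using P1[OF c True] by linarith
  next
    case False
    have "(1 + (2 * real n - 2) / real m) \<le> 3 - 2 / real m"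
    proof -
      have "(2 * real n - 2) / real m \<le> (2 * real m - 2) / real m"
        using False M by (intro divide_right_mono) auto
      also have "\<dots> = 2 - 2 / real m" using M by (simp add: field_simps)
      finally show ?thesis by simp
    qed
    hence "(1 + (2 * real n - 2) / real m) * opt_cost n m E \<le> (3 - 2 / real m) * opt_cost n m E"
      unfolding oc2 using SQ by (intro mult_right_mono) auto
    thus ?thesis using P2[OF c] by linarith
  qed
  show ?thesis using P1 P2 P3 by blast
qed

end
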